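(* Let $A\in\mathbb{R}^{m\times n}$, $b\in\mathbb{R}^m$, let $L\in\mathbb{R}^{s\times n}$ have full column rank, and let $W_1,\dots,W_M\in\mathbb{R}^{m\times\ell}$ satisfy $\sum_{i=1}^M W_iW_i^\top=I_m$. Let $\tau(1),\tau(2),\dots$ be random variables with values in $\{1,\dots,M\}$ such that for each $j\in\mathbb{N}_0$, $(\tau(jM+1),\dots,\tau((j+1)M))$ is a (random) permutation of $\{1,\dots,M\}$ (random cyclic sampling). Write $A_{\tau(k)}=W_{\tau(k)}^\top A$, $b_{\tau(k)}=W_{\tau(k)}^\top b$. (i) Let $\lambda>0$, $y_0=0$, and define $$y_k = y_{k-1} - B_kA_{\tau(k)}^\top(A_{\tau(k)}y_{k-1}-b_{\tau(k)}),\qquad B_k=\Big(\lambda L^\top L+\sum_{i=1}^kA_{\tau(i)}^\top A_{\tau(i)}\Big)^{-1}.$$ Then for every $j\in\mathbb{N}$, $y_{jM}=x(\lambda/j)$. (ii) Let $\Lambda_1,\Lambda_2,\dots$ be real numbers with $\lambda_k=\sum_{i=1}^k\Lambda_i>0$ for all $k$, let $x_0\in\mathbb{R}^n$ be arbitrary, and define $$x_k = x_{k-1}-B_k\big(A_{\tau(k)}^\top(A_{\tau(k)}x_{k-1}-b_{\tau(k)})+\Lambda_kL^\top Lx_{k-1}\big),\qquad B_k=\Big(\sum_{i=1}^k\Lambda_iL^\top L+\sum_{i=1}^kA_{\tau(i)}^\top A_{\tau(i)}\Big)^{-1}.$$ Then for every $j\in\mathbb{N}$, $x_{jM}=x(\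lambda_{jM}/j)$.
   Context: For $\mu>0$, $x(\mu)=(A^\top A+\mu L^\top L)^{-1}A^\top b$ denotes the Tikhonov-regularized solution of $\min_x\|Ax-b\|_2^2+\mu\|Lx\|_2^2$. *)

theory Defs
  imports "HOL-Analysis.Analysis"
begin

definition tikhonov :: "real^'n^'m \<Rightarrow> real^'m \<Rightarrow> real^'n^'s \<Rightarrow> real \<Rightarrow> real^'n" where
  "tikhonov A b L \<mu> =
     matrix_inv (transpose A ** A + \<mu> *\<^sub>R (transpose L ** L)) *v (transpose A *v b)"

text \<open>Random cyclic sampling (pathwise): each block (tau(jM+1),...,tau((j+1)M))
  is a permutation of {1..M}.\<close>
definition cyclic_sampling :: "nat \<Rightarrow> (nat \<Rightarrow> nat) \<Rightarrow> bool" where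
  "cyclic_sampling M \<tau> \<longleftrightarrow>
     (\<forall>j. bij_betw \<tau> {j*M+1..(j+1)*M} {1..M})"

end

theory Submission imports Defs begin

lemma sum_mmul_left: "(\<Sum>i\<in>S. (X::real^'n^'m) ** F i) = X ** sum F S"
  by (induction S rule: infinite_finite_induct) (auto simp: matrix_add_ldistrib)

lemma matrix_add_rdistrib': "((B + C) ** (A::real^'p^'n)) = (B ** A) + (C ** A)"
  by (vector matrix_matrix_mult_def sum.distrib[symmetric] field_simps)

lemma sum_mmul_right: "(\<Sum>i\<in>S. F i ** (X::real^'n^'m)) = sum F S ** X"
  by (induction S rule: infinite_finite_induct) (auto simp: matrix_add_rdistrib')

lemma sum_mvmul: "(\<Sum>i\<in>S. F i *v (v::real^'n)) = sum F S *v v"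
  by (induction S rule: infinite_finite_induct) (auto simp: matrix_vector_mult_add_rdistrib)

lemma sum_mvmul0: "(\<Sum>i\<in>S. (F i :: real^'n^'m)) *v (v::real^'n) = (\<Sum>i\<in>S. F i *v v)"
  by (simp add: sum_mvmul)

lemma inv_right: assumes "invertible (G::real^'n^'n)" shows "G ** matrix_inv G = mat 1"
  and "matrix_inv G ** G = mat 1"
  using someI_ex[OF assms[unfolded invertible_def]] unfolding matrix_inv_def by auto

lemma solve_inv: assumes "invertible (G::real^'n^'n)" "G *v y = r" shows "y = matrix_inv G *v r"
  using assms inv_right(2)[OF assms(1)] by (metis matrix_vector_mul_assoc matrix_vector_mul_lid)

lemma gram_quad: "v \<bullet> ((transpose X ** (X::real^'n^'m)) *v v) = (X *v v) \<bullet> (X *v v)"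
proof -
  have "v \<bullet> ((transpose X ** X) *v v) = v \<bullet> (transpose X *v (X *v v))"
    by (simp only: matrix_vector_mul_assoc)
  also have "\<dots> = ((X *v v) v* X) \<bullet> v"
    by (simp add: inner_commute)
  also have "\<dots> = (X *v v) \<bullet> (X *v v)" by (simp add: dot_lmul_matrix)
  finally show ?thesis .
qed

lemma gram_nonneg: "v \<bullet> ((transpose X ** (X::real^'n^'m)) *v v) \<ge> 0"
  by (simp add: gram_quad)

lemma pd_invertible:
  fixes G :: "real^'n^'n"
  assumes "\<And>v. v \<noteq> 0 \<Longrightarrow> v \<bullet> (G *v v) > 0"
  shows "invertible G"
proof -
  have "inj ((*v) G)"
  proof (rule linear_injective_0[THEN iffD2])
    show "linear ((*v) G)" by simp
    show "\<forall>x. G *v x = 0 \<longrightarrow> x = 0" using assms by (metis inner_zero_right less_irrefl)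
  qed
  thus ?thesis by (simp add: invertible_left_inverse matrix_left_invertible_injective)
qed

lemma reg_invertible:
  fixes L :: "real^'n^'s" and C :: "nat \<Rightarrow> real^'n^'p"
  assumes "rank L = CARD('n)" "c > 0"
  shows "invertible (c *\<^sub>R (transpose L ** L) + (\<Sum>i\<in>S. transpose (C i) ** C i))"
proof (rule pd_invertible)
  fix v :: "real^'n" assume v: "v \<noteq> 0"
  have inj: "inj ((*v) L)" using assms(1) full_rank_injective by blast
  have "L *v v \<noteq> 0" using inj v by (metis injD matrix_vector_mult_0_right)
  hence p: "v \<bullet> ((transpose L ** L) *v v) > 0" by (simp add: gram_quad)
  have s: "v \<bullet> ((\<Sum>i\<in>S. transpose (C i) ** C i) *v v) \<ge> 0"
    unfolding sum_mvmul0 inner_sum_right by (rule sum_nonneg) (rule gram_nonneg)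
  have "v \<bullet> ((c *\<^sub>R (transpose L ** L) + (\<Sum>i\<in>S. transpose (C i) ** C i)) *v v)
     = c * (v \<bullet> ((transpose L ** L) *v v)) + v \<bullet> ((\<Sum>i\<in>S. transpose (C i) ** C i) *v v)"
    by (simp only: matrix_vector_mult_add_rdistrib inner_add_right scaleR_matrix_vector_assoc[symmetric] inner_scaleR_right)
  thus "v \<bullet> ((c *\<^sub>R (transpose L ** L) + (\<Sum>i\<in>S. transpose (C i) ** C i)) *v v) > 0"
    using p s assms(2) by (smt (verit) mult_pos_pos)
qed

lemma block_sum:
  fixes f :: "nat \<Rightarrow> 'a::real_vector"
  assumes "\<forall>j. bij_betw \<tau> {j*M+1..(j+1)*M} {1..M}"
  shows "(\<Sum>i=1..j*M. f (\<tau> i)) = real j *\<^sub>R (\<Sum>t=1..M. f t)"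
proof (induction j)
  case 0 then show ?case by simp
next
  case (Suc j)
  have "(\<Sum>i=1..j*M + M. f (\<tau> i)) = (\<Sum>i=1..j*M. f (\<tau> i)) + (\<Sum>i=j*M+1..j*M+M. f (\<tau> i))"
    by (rule sum.ub_add_nat) simp
  also have "(\<Sum>i=j*M+1..j*M+M. f (\<tau> i)) = (\<Sum>t=1..M. f t)"
    using sum.reindex_bij_betw[OF assms[rule_format, of j], of f] by (simp add: add.commute)
  finally show ?case using Suc by (simp add: add.commute algebra_simps)
qed

lemma recur:
  fixes G :: "nat \<Rightarrow> real^'n^'n" and z e :: "nat \<Rightarrow> real^'n"
  assumes inv: "\<forall>k\<ge>1. invertible (G k)"
    and step: "\<forall>k\<ge>1. z k = z (k-1) - matrix_inv (G k) *v (G k *v z (k-1) - G (k-1) *v z (k-1) - e k)"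
    and z0: "G 0 *v z 0 = 0"
  shows "G k *v z k = (\<Sum>i=1..k. e i)"
proof (induction k)
  case 0 then show ?case using z0 by simp
next
  case (Suc k)
  have I: "G (Suc k) ** matrix_inv (G (Suc k)) = mat 1" using inv inv_right(1) by auto
  define u where "u = G (Suc k) *v z k - G k *v z k - e (Suc k)"
  have zs: "z (Suc k) = z k - matrix_inv (G (Suc k)) *v u"
    using step[rule_format, of "Suc k"] unfolding u_def by simp
  have gu: "G (Suc k) *v (matrix_inv (G (Suc k)) *v u) = u"
    by (simp only: matrix_vector_mul_assoc I matrix_vector_mul_lid)
  have "G (Suc k) *v z (Suc k) = G (Suc k) *v z k - u"
    unfolding zs by (simp only: matrix_vector_mult_diff_distrib gu)
  also have "\<dots> = G k *v z k + e (Suc k)" unfolding u_def by simp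
  finally show ?case using Suc by simp
qed

lemma tr_prod: "transpose (transpose (W::real^'l^'m) ** (A::real^'n^'m)) ** (transpose W ** A)
   = transpose A ** (W ** transpose W) ** A"
  by (simp add: matrix_transpose_mul matrix_mul_assoc)

lemma tr_vec: "transpose (transpose (W::real^'l^'m) ** (A::real^'n^'m)) *v (transpose W *v b)
   = (transpose A ** (W ** transpose W)) *v b"
  by (simp only: matrix_transpose_mul transpose_transpose matrix_vector_mul_assoc matrix_mul_assoc)

lemma final:
  fixes A :: "real^'n^'m" and b :: "real^'m" and L :: "real^'n^'s"
    and W :: "nat \<Rightarrow> real^'l^'m" and z :: "real^'n"
  assumes L_rank: "rank L = CARD('n)"
    and W_sum: "(\<Sum>i=1..M. W i ** transpose (W i)) = mat 1"
    and tau: "\<forall>j. bij_betw \<tau> {j*M+1..(j+1)*M} {1..M}"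
    and c: "c > 0" and j: "j \<ge> 1"
    and eq: "(c *\<^sub>R (transpose L ** L) + (\<Sum>i=1..j*M. transpose (transpose (W (\<tau> i)) ** A) ** (transpose (W (\<tau> i)) ** A)))
       *v z = (\<Sum>i=1..j*M. transpose (transpose (W (\<tau> i)) ** A) *v (transpose (W (\<tau> i)) *v b))"
  shows "z = tikhonov A b L (c / real j)"
proof -
  have s1: "(\<Sum>i=1..j*M. transpose (transpose (W (\<tau> i)) ** A) ** (transpose (W (\<tau> i)) ** A))
     = real j *\<^sub>R (transpose A ** A)"
  proof -
    have "(\<Sum>t=1..M. transpose (transpose (W t) ** A) ** (transpose (W t) ** A)) = transpose A ** A"
      unfolding tr_prod sum_mmul_right sum_mmul_left W_sum by simp
    thus ?thesis using block_sum[OF tau, of "\<lambda>t. transpose (transpose (W t) ** A) ** (transpose (W t) ** A)" j] by simp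
  qed
  have s2: "(\<Sum>i=1..j*M. transpose (transpose (W (\<tau> i)) ** A) *v (transpose (W (\<tau> i)) *v b))
     = real j *\<^sub>R (transpose A *v b)"
  proof -
    have "(\<Sum>t=1..M. transpose (transpose (W t) ** A) *v (transpose (W t) *v b)) = transpose A *v b"
      unfolding tr_vec sum_mvmul sum_mmul_left W_sum by simp
    thus ?thesis using block_sum[OF tau, of "\<lambda>t. transpose (transpose (W t) ** A) *v (transpose (W t) *v b)" j] by simp
  qed
  define H where "H = transpose A ** A + (c / real j) *\<^sub>R (transpose L ** L)"
  have jpos: "real j > 0" using j by simp
  have Hinv: "invertible H"
    using reg_invertible[OF L_rank, where c="c / real j" and S="{0::nat}" and C="\<lambda>_. A"] c jpos
    by (simp add: H_def add.commute)
  have "c *\<^sub>R (transpose L ** L) + real j *\<^sub>R (transpose A ** A) = real j *\<^sub>R H"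
    using jpos unfolding H_def by (simp add: scaleR_add_right)
  with eq s1 s2 have "(real j *\<^sub>R H) *v z = real j *\<^sub>R (transpose A *v b)" by simp
  hence "real j *\<^sub>R (H *v z) = real j *\<^sub>R (transpose A *v b)"
    by (simp del: transpose_matrix_vector add: scaleR_matrix_vector_assoc)
  hence "H *v z = transpose A *v b" using jpos by simp
  from solve_inv[OF Hinv this] show ?thesis unfolding tikhonov_def H_def .
qed

theorem theorem2p3:
  fixes A :: "real^'n^'m" and b :: "real^'m" and L :: "real^'n^'s"
    and W :: "nat \<Rightarrow> real^'l^'m" and M :: nat and \<tau> :: "nat \<Rightarrow> nat"
    and lam :: real and y :: "nat \<Rightarrow> real^'n"
    and Lam :: "nat \<Rightarrow> real" and x :: "nat \<Rightarrow> real^'n"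
  assumes L_rank: "rank L = CARD('n)"
    and W_sum: "(\<Sum>i=1..M. W i ** transpose (W i)) = mat 1"
    and tau: "cyclic_sampling M \<tau>"
  shows
    "(lam > 0 \<and> y 0 = 0 \<and>
      (\<forall>k\<ge>1. y k = y (k-1) -
          matrix_inv (lam *\<^sub>R (transpose L ** L) +
             (\<Sum>i=1..k. transpose (transpose (W (\<tau> i)) ** A) ** (transpose (W (\<tau> i)) ** A)))
          *v (transpose (transpose (W (\<tau> k)) ** A) *v
               ((transpose (W (\<tau> k)) ** A) *v y (k-1) - transpose (W (\<tau> k)) *v b)))
      \<longrightarrow> (\<forall>j\<ge>1. y (j*M) = tikhonov A b L (lam / real j)))
   \<and>
     ((\<forall>k\<ge>1. (\<Sum>i=1..k. Lam i) > 0) \<and>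
      (\<forall>k\<ge>1. x k = x (k-1) -
          matrix_inv ((\<Sum>i=1..k. Lam i *\<^sub>R (transpose L ** L)) +
             (\<Sum>i=1..k. transpose (transpose (W (\<tau> i)) ** A) ** (transpose (W (\<tau> i)) ** A)))
          *v (transpose (transpose (W (\<tau> k)) ** A) *v
                ((transpose (W (\<tau> k)) ** A) *v x (k-1) - transpose (W (\<tau> k)) *v b)
              + Lam k *\<^sub>R ((transpose L ** L) *v x (k-1))))
      \<longrightarrow> (\<forall>j\<ge>1. x (j*M) = tikhonov A b L ((\<Sum>i=1..j*M. Lam i) / real j)))"
proof -
  let ?P = "transpose L ** L"
  define T where "T i = transpose (transpose (W (\<tau> i)) ** A) ** (transpose (W (\<tau> i)) ** A)" for i
  define e where "e i = transpose (transpose (W (\<tau> i)) ** A) *v (transpose (W (\<tau> i)) *v b)" for i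
  have tau': "\<forall>j. bij_betw \<tau> {j*M+1..(j+1)*M} {1..M}" using tau unfolding cyclic_sampling_def .
  have M1: "M \<ge> 1"
  proof (rule ccontr)
    assume "\<not> M \<ge> 1" hence "M = 0" by simp
    with W_sum have "(mat 1 :: real^'m^'m) = 0" by simp
    hence "(mat 1 :: real^'m^'m) $ undefined $ undefined = 0" by simp
    thus False by (simp add: mat_def)
  qed
  have Tk: "transpose (transpose (W (\<tau> k)) ** A) *v ((transpose (W (\<tau> k)) ** A) *v v - transpose (W (\<tau> k)) *v b)
      = T k *v v - e k" for k v
    unfolding T_def e_def by (simp only: matrix_vector_mult_diff_distrib matrix_vector_mul_assoc)
  have Ssplit: "(\<Sum>i=1..k. T i) = (\<Sum>i=1..k-1. T i) + T k" if "k \<ge> 1" for k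
    using that by (cases k) (auto simp: sum.cl_ivl_Suc)
  have Lsplit: "(\<Sum>i=1..k. Lam i) = (\<Sum>i=1..k-1. Lam i) + Lam k" if "k \<ge> 1" for k
    using that by (cases k) (auto simp: sum.cl_ivl_Suc)
  show ?thesis
  proof (intro conjI impI allI)
    fix j :: nat
    assume H: "lam > 0 \<and> y 0 = 0 \<and>
      (\<forall>k\<ge>1. y k = y (k-1) -
          matrix_inv (lam *\<^sub>R (transpose L ** L) +
             (\<Sum>i=1..k. transpose (transpose (W (\<tau> i)) ** A) ** (transpose (W (\<tau> i)) ** A)))
          *v (transpose (transpose (W (\<tau> k)) ** A) *v
               ((transpose (W (\<tau> k)) ** A) *v y (k-1) - transpose (W (\<tau> k)) *v b)))"
      and j: "j \<ge> 1"
    define G where "G k = lam *\<^sub>R ?P + (\<Sum>i=1..k. T i)" for k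
    have inv: "\<forall>k\<ge>1. invertible (G k)"
    proof (intro allI impI)
      fix k :: nat assume k: "k \<ge> 1"
      show "invertible (G k)" unfolding G_def T_def
        by (rule reg_invertible[OF L_rank]) (use conjunct1[OF H] in simp)
    qed
    have step: "\<forall>k\<ge>1. y k = y (k-1) - matrix_inv (G k) *v (G k *v y (k-1) - G (k-1) *v y (k-1) - e k)"
    proof (intro allI impI)
      fix k :: nat assume k: "k \<ge> 1"
      have "G k *v y (k-1) - G (k-1) *v y (k-1) = T k *v y (k-1)"
        unfolding G_def Ssplit[OF k] by (simp add: matrix_vector_mult_add_rdistrib)
      thus "y k = y (k-1) - matrix_inv (G k) *v (G k *v y (k-1) - G (k-1) *v y (k-1) - e k)"
        using conjunct2[OF conjunct2[OF H], rule_format, OF k] Tk unfolding G_def T_def by simp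
    qed
    have "G (j*M) *v y (j*M) = (\<Sum>i=1..j*M. e i)"
      by (rule recur[OF inv step]) (use conjunct1[OF conjunct2[OF H]] in simp)
    thus "y (j*M) = tikhonov A b L (lam / real j)"
      using final[OF L_rank W_sum tau' _ j, of lam] conjunct1[OF H] unfolding G_def T_def e_def by simp
  next
    fix j :: nat
    assume H: "(\<forall>k\<ge>1. (\<Sum>i=1..k. Lam i) > 0) \<and>
      (\<forall>k\<ge>1. x k = x (k-1) -
          matrix_inv ((\<Sum>i=1..k. Lam i *\<^sub>R (transpose L ** L)) +
             (\<Sum>i=1..k. transpose (transpose (W (\<tau> i)) ** A) ** (transpose (W (\<tau> i)) ** A)))
          *v (transpose (transpose (W (\<tau> k)) ** A) *v
                ((transpose (W (\<tau> k)) ** A) *v x (k-1) - transpose (W (\<tau> k)) *v b)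
              + Lam k *\<^sub>R ((transpose L ** L) *v x (k-1))))"
      and j: "j \<ge> 1"
    define G where "G k = (\<Sum>i=1..k. Lam i) *\<^sub>R ?P + (\<Sum>i=1..k. T i)" for k
    have Geq: "G k = (\<Sum>i=1..k. Lam i *\<^sub>R ?P) + (\<Sum>i=1..k. T i)" for k
      unfolding G_def by (simp add: scaleR_sum_left)
    have inv: "\<forall>k\<ge>1. invertible (G k)"
    proof (intro allI impI)
      fix k :: nat assume k: "k \<ge> 1"
      show "invertible (G k)" unfolding G_def T_def
        by (rule reg_invertible[OF L_rank]) (use conjunct1[OF H, rule_format, OF k] in simp)
    qed
    have step: "\<forall>k\<ge>1. x k = x (k-1) - matrix_inv (G k) *v (G k *v x (k-1) - G (k-1) *v x (k-1) - e k)"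
    proof (intro allI impI)
      fix k :: nat assume k: "k \<ge> 1"
      have "G k *v x (k-1) - G (k-1) *v x (k-1) = T k *v x (k-1) + Lam k *\<^sub>R (?P *v x (k-1))"
        unfolding G_def Ssplit[OF k] Lsplit[OF k]
        by (simp del: transpose_matrix_vector add: matrix_vector_mult_add_rdistrib scaleR_add_left scaleR_matrix_vector_assoc)
      hence "G k *v x (k-1) - G (k-1) *v x (k-1) - e k
         = transpose (transpose (W (\<tau> k)) ** A) *v ((transpose (W (\<tau> k)) ** A) *v x (k-1) - transpose (W (\<tau> k)) *v b)
              + Lam k *\<^sub>R ((transpose L ** L) *v x (k-1))"
        unfolding Tk by (simp add: algebra_simps)
      thus "x k = x (k-1) - matrix_inv (G k) *v (G k *v x (k-1) - G (k-1) *v x (k-1) - e k)"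
        using conjunct2[OF H, rule_format, OF k] unfolding Geq T_def by simp
    qed
    have "G (j*M) *v x (j*M) = (\<Sum>i=1..j*M. e i)"
      by (rule recur[OF inv step]) (simp add: G_def)
    moreover have "(\<Sum>i=1..j*M. Lam i) > 0" using conjunct1[OF H] j M1 by simp
    ultimately show "x (j*M) = tikhonov A b L ((\<Sum>i=1..j*M. Lam i) / real j)"
      using final[OF L_rank W_sum tau' _ j, of "\<Sum>i=1..j*M. Lam i"] unfolding G_def T_def e_def by simp
  qed
qed

end
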